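(* Let $k>0$, let $0<c<p$, let $T\ge 1$ be an integer, let $b_1>0$ and $a_1>\max(1,1/k)$, and let the demand-shape function be $\ell(y)=y^{k}$. Assume the set of feasible wholesale prices is $W=[\underline{w},\overline{w}]$ with $0<\underline{w}\le c<p\le\overline{w}$. Then: (a) There exists a standardized Markov perfect solution (SMPS). (b) There exists a Markov perfect equilibrium (MPE) of the dynamic wholesale-price game. (c) If $(w^*_t,\tilde z^*_t)_{1\le t\le T}$ is any SMPS with standardized value functions $(f^R_t,\hat f^R_t,f^M_t)_{1\le t\le T+1}$, and one defines, for $a\in A$, $b\in B$, $w\in W$, $$\tilde w_t(a,b):=w^*_t(a),\qquad \tilde q_t(a,b,w):=b^{1/k}\,\tilde z^*_t(a,w),$$ then $(\tilde w_t,\tilde q_t)_{1\le t\le T}$ is an MPE of the game, with value functions $$V^R_t(a,b)=\frac{b^{1/k}}{a-1}f^R_t(a),\qquad \hat V^R_t(a,b,w)=\frac{b^{1/k}}{a-1}\hat f^R_t(a,w),\qquad V^M_t(a,b)=\frac{b^{1/k}}{a-1}f^M_t(a).$$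
   Context: Setting. A manufacturer M and a retailer R interact over periods $t=1,\dots,T$. Retail price $p$ and unit production cost $c$ are fixed with $0<c<p$. The feasible wholesale prices form a set $W\subset(0,\infty)$ with $[c,p]\subset W$; feasible order quantities are $Q=[0,\infty)$. An unknown parameter $\Theta>0$ has Gamma prior density $\phi(\theta\mid a,b)=b^{a}\theta^{a-1}e^{-b\theta}/\Gamma(a)$; given $\Theta=\theta$ the demands $D_1,\dots,D_T$ are i.i.d. with $P(D_t\le y\mid\theta)=1-e^{-\theta\ell(y)}$, here $\ell(y)=y^k$. The predictive distribution function with hyperparameters $(a,b)$ is $G(y\mid a,b)=1-\big(b/(b+\ell(y))\big)^{a}$, $y\ge0$, and $\bar G=1-G$; $E[\,\cdot\mid a,b]$ denotes expectation with respect to $D\sim G(\cdot\mid a,b)$. Let $A=\{a_1+n:n=0,1,2,\dots\}$ and $B=[b_1,\infty)$. In each period the manufacturer chooses $w\in W$, the retailer observes it and orders $q\in Q$, sales $s=\min(D,q)$ are publicly observed (unmet demand is lost and unobserved), and the public belief state $(a,b)$ moves to $\Phi(a,b,q,d)=(a+\mathbf 1\{\min(d,q)<q\},\ b+\ell(\min(d,q)))$. Per-period payoffs: retailer $\Pi^R(w,q\mid a,b)=p\,E[\min(D,q)\mid a,b]-wq$; manufacturer $\Pi^M(w,q)=(w-c)q$. Markov strategies: for the manufacturer, Borel maps $w_t:A\times B\to W$; for the retailer, Borel maps $q_t:A\times B\times W\to Q$, $t=1,\dots,T$. A pair $(w^*_t,q^*_t)_{t\le T}$ is an MPE if there are functions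 $V^R_t,V^M_t:A\times B\to\mathbb R$, $\hat V^R_t:A\times B\times W\to\mathbb R$ ($t=1,\dots,T+1$) such that for all $a\in A,b\in B,w\in W$: (i) $V^R_{T+1}=\hat V^R_{T+1}=V^M_{T+1}=0$; (ii) for each $t\le T$, $\hat V^R_t(a,b,w)=\max_{q\in Q}\{\Pi^R(w,q\mid a,b)+E[V^R_{t+1}(\Phi(a,b,q,D))\mid a,b]\}$ and $q^*_t(a,b,w)$ attains this maximum; (iii) for each $t\le T$, $V^M_t(a,b)=\max_{w\in W}\{\Pi^M(w,q^*_t(a,b,w))+E[V^M_{t+1}(\Phi(a,b,q^*_t(a,b,w),D))\mid a,b]\}$ and $w^*_t(a,b)$ attains this maximum; (iv) $V^R_t(a,b)=\hat V^R_t(a,b,w^*_t(a,b))$. Standardized problem. Let $\tilde Q=[0,\infty)$. Standardized per-period payoffs: $\tilde\Pi^R(w,\tilde z\mid a)=(a-1)\big(p\,E[\min(D,\tilde z)\mid a,1]-w\tilde z\big)$ and $\tilde\Pi^M(w,\tilde z\mid a)=(a-1)(w-c)\tilde z$. For $f:A\to\mathbb R$, define $\mathcal E[f,\tilde z\mid a]=\frac{a-1}{a-1/k}G(\tilde z\mid a-1/k,1)f(a+1)+\bar G(\tilde z\mid a-1/k,1)f(a)$. Standardized Markov strategies are maps $w_t:A\to W$ and $\tilde z_t:A\times W\to\tilde Q$. A pair $(w^*_t,\tilde z^*_t)_{t\le T}$ is an SMPS if there are functions $f^R_t,f^M_t:A\to\mathbb R$, $\hat f^R_t:A\times W\to\mathbb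 R$ ($t=1,\dots,T+1$) such that for all $a\in A,w\in W$: (i) $f^R_{T+1}=\hat f^R_{T+1}=f^M_{T+1}=0$; (ii) $\hat f^R_t(a,w)=\max_{\tilde z\in\tilde Q}\{\tilde\Pi^R(w,\tilde z\mid a)+\mathcal E[f^R_{t+1},\tilde z\mid a]\}$ with $\tilde z^*_t(a,w)$ a maximizer; (iii) $f^M_t(a)=\max_{w\in W}\{\tilde\Pi^M(w,\tilde z^*_t(a,w)\mid a)+\mathcal E[f^M_{t+1},\tilde z^*_t(a,w)\mid a]\}$ with $w^*_t(a)$ a maximizer; (iv) $f^R_t(a)=\hat f^R_t(a,w^*_t(a))$. *)

theory Defs
  imports "HOL-Analysis.Analysis"
begin

definition Aset :: "real \<Rightarrow> real set" where
  "Aset a1 = {a1 + real n | n. True}"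

definition Bset :: "real \<Rightarrow> real set" where
  "Bset b1 = {b1..}"

definition ell :: "real \<Rightarrow> real \<Rightarrow> real" where
  "ell k y = y powr k"

definition predG :: "real \<Rightarrow> real \<Rightarrow> real \<Rightarrow> real \<Rightarrow> real" where
  "predG k a b y = (if y < 0 then 0 else 1 - (b / (b + ell k y)) powr a)"

text \<open>The law of D ~ G(. | a,b), as the Lebesgue-Stieltjes measure of G.\<close>
definition pred_dist :: "real \<Rightarrow> real \<Rightarrow> real \<Rightarrow> real measure" where
  "pred_dist k a b = interval_measure (predG k a b)"

definition Ex :: "real \<Rightarrow> real \<Rightarrow> real \<Rightarrow> (real \<Rightarrow> real) \<Rightarrow> real" where
  "Ex k a b f = (\<integral>d. f d \<partial>pred_dist k a b)"

definition Phi :: "real \<Rightarrow> real \<Rightarrow> real \<Rightarrow> real \<Rightarrow> real \<Rightarrow> real \<times> real" where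
  "Phi k a b q d = (a + (if min d q < q then 1 else 0), b + ell k (min d q))"

definition PiR :: "real \<Rightarrow> real \<Rightarrow> real \<Rightarrow> real \<Rightarrow> real \<Rightarrow> real \<Rightarrow> real" where
  "PiR p k w q a b = p * Ex k a b (\<lambda>d. min d q) - w * q"

definition PiM :: "real \<Rightarrow> real \<Rightarrow> real \<Rightarrow> real" where
  "PiM c w q = (w - c) * q"

definition Cont :: "real \<Rightarrow> (real \<Rightarrow> real \<Rightarrow> real) \<Rightarrow> real \<Rightarrow> real \<Rightarrow> real \<Rightarrow> real" where
  "Cont k V a b q = Ex k a b (\<lambda>d. case_prod V (Phi k a b q d))"

definition ContInt :: "real \<Rightarrow> (real \<Rightarrow> real \<Rightarrow> real) \<Rightarrow> real \<Rightarrow> real \<Rightarrow> real \<Rightarrow> bool" where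
  "ContInt k V a b q = integrable (pred_dist k a b) (\<lambda>d. case_prod V (Phi k a b q d))"

text \<open>Markov strategies (Borel maps) for periods 1..T.
  wS t a b is the wholesale price, qS t a b w the order quantity.\<close>
definition markov_strategies ::
  "real \<Rightarrow> real \<Rightarrow> real set \<Rightarrow> nat \<Rightarrow> (nat \<Rightarrow> real \<Rightarrow> real \<Rightarrow> real)
     \<Rightarrow> (nat \<Rightarrow> real \<Rightarrow> real \<Rightarrow> real \<Rightarrow> real) \<Rightarrow> bool" where
  "markov_strategies a1 b1 W T wS qS \<longleftrightarrow>
     (\<forall>t\<in>{1..T}. \<forall>a\<in>Aset a1.
        (\<forall>b\<in>Bset b1. wS t a b \<in> W) \<and>
        (\<forall>b\<in>Bset b1. \<forall>w\<in>W. qS t a b w \<ge> 0) \<and>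
        (\<lambda>b. wS t a b) \<in> borel_measurable (restrict_space borel (Bset b1)) \<and>
        (\<lambda>(b, w). qS t a b w) \<in> borel_measurable (restrict_space borel (Bset b1 \<times> W)))"

text \<open>MPE with given value functions (conditions (i)-(iv)); the expectations are
  required to exist (integrability).\<close>
definition MPE_with ::
  "real \<Rightarrow> real \<Rightarrow> real \<Rightarrow> real \<Rightarrow> real \<Rightarrow> real set \<Rightarrow> nat
   \<Rightarrow> (nat \<Rightarrow> real \<Rightarrow> real \<Rightarrow> real) \<Rightarrow> (nat \<Rightarrow> real \<Rightarrow> real \<Rightarrow> real \<Rightarrow> real)
   \<Rightarrow> (nat \<Rightarrow> real \<Rightarrow> real \<Rightarrow> real) \<Rightarrow> (nat \<Rightarrow> real \<Rightarrow> real \<Rightarrow> real \<Rightarrow> real)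
   \<Rightarrow> (nat \<Rightarrow> real \<Rightarrow> real \<Rightarrow> real) \<Rightarrow> bool" where
  "MPE_with p c k a1 b1 W T wS qS VR VRh VM \<longleftrightarrow>
     markov_strategies a1 b1 W T wS qS \<and>
     (\<forall>a\<in>Aset a1. \<forall>b\<in>Bset b1.
        VR (T+1) a b = 0 \<and> VM (T+1) a b = 0 \<and> (\<forall>w\<in>W. VRh (T+1) a b w = 0)) \<and>
     (\<forall>t\<in>{1..T}. \<forall>a\<in>Aset a1. \<forall>b\<in>Bset b1. \<forall>w\<in>W.
        (\<forall>q\<ge>0. ContInt k (VR (Suc t)) a b q \<and>
                PiR p k w q a b + Cont k (VR (Suc t)) a b q \<le> VRh t a b w) \<and>
        VRh t a b w = PiR p k w (qS t a b w) a b + Cont k (VR (Suc t)) a b (qS t a b w)) \<and>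
     (\<forall>t\<in>{1..T}. \<forall>a\<in>Aset a1. \<forall>b\<in>Bset b1.
        (\<forall>w\<in>W. ContInt k (VM (Suc t)) a b (qS t a b w) \<and>
                PiM c w (qS t a b w) + Cont k (VM (Suc t)) a b (qS t a b w) \<le> VM t a b) \<and>
        VM t a b = PiM c (wS t a b) (qS t a b (wS t a b))
                   + Cont k (VM (Suc t)) a b (qS t a b (wS t a b))) \<and>
     (\<forall>t\<in>{1..T}. \<forall>a\<in>Aset a1. \<forall>b\<in>Bset b1. VR t a b = VRh t a b (wS t a b))"

definition is_MPE ::
  "real \<Rightarrow> real \<Rightarrow> real \<Rightarrow> real \<Rightarrow> real \<Rightarrow> real set \<Rightarrow> nat
   \<Rightarrow> (nat \<Rightarrow> real \<Rightarrow> real \<Rightarrow> real) \<Rightarrow> (nat \<Rightarrow> real \<Rightarrow> real \<Rightarrow> real \<Rightarrow> real) \<Rightarrow> bool" where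
  "is_MPE p c k a1 b1 W T wS qS \<longleftrightarrow> (\<exists>VR VRh VM. MPE_with p c k a1 b1 W T wS qS VR VRh VM)"

definition PiR_std :: "real \<Rightarrow> real \<Rightarrow> real \<Rightarrow> real \<Rightarrow> real \<Rightarrow> real" where
  "PiR_std p k w z a = (a - 1) * (p * Ex k a 1 (\<lambda>d. min d z) - w * z)"

definition PiM_std :: "real \<Rightarrow> real \<Rightarrow> real \<Rightarrow> real \<Rightarrow> real" where
  "PiM_std c w z a = (a - 1) * (w - c) * z"

definition Eop :: "real \<Rightarrow> (real \<Rightarrow> real) \<Rightarrow> real \<Rightarrow> real \<Rightarrow> real" where
  "Eop k f z a = (a - 1) / (a - 1 / k) * predG k (a - 1 / k) 1 z * f (a + 1)
                 + (1 - predG k (a - 1 / k) 1 z) * f a"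

definition std_strategies ::
  "real \<Rightarrow> real set \<Rightarrow> nat \<Rightarrow> (nat \<Rightarrow> real \<Rightarrow> real) \<Rightarrow> (nat \<Rightarrow> real \<Rightarrow> real \<Rightarrow> real) \<Rightarrow> bool" where
  "std_strategies a1 W T wS zS \<longleftrightarrow>
     (\<forall>t\<in>{1..T}. \<forall>a\<in>Aset a1.
        wS t a \<in> W \<and> (\<forall>w\<in>W. zS t a w \<ge> 0) \<and>
        (\<lambda>w. zS t a w) \<in> borel_measurable (restrict_space borel W))"

definition SMPS_with ::
  "real \<Rightarrow> real \<Rightarrow> real \<Rightarrow> real \<Rightarrow> real set \<Rightarrow> nat
   \<Rightarrow> (nat \<Rightarrow> real \<Rightarrow> real) \<Rightarrow> (nat \<Rightarrow> real \<Rightarrow> real \<Rightarrow> real)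
   \<Rightarrow> (nat \<Rightarrow> real \<Rightarrow> real) \<Rightarrow> (nat \<Rightarrow> real \<Rightarrow> real \<Rightarrow> real)
   \<Rightarrow> (nat \<Rightarrow> real \<Rightarrow> real) \<Rightarrow> bool" where
  "SMPS_with p c k a1 W T wS zS fR fRh fM \<longleftrightarrow>
     std_strategies a1 W T wS zS \<and>
     (\<forall>a\<in>Aset a1. fR (T+1) a = 0 \<and> fM (T+1) a = 0 \<and> (\<forall>w\<in>W. fRh (T+1) a w = 0)) \<and>
     (\<forall>t\<in>{1..T}. \<forall>a\<in>Aset a1. \<forall>w\<in>W.
        (\<forall>z\<ge>0. PiR_std p k w z a + Eop k (fR (Suc t)) z a \<le> fRh t a w) \<and>
        fRh t a w = PiR_std p k w (zS t a w) a + Eop k (fR (Suc t)) (zS t a w) a) \<and>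
     (\<forall>t\<in>{1..T}. \<forall>a\<in>Aset a1.
        (\<forall>w\<in>W. PiM_std c w (zS t a w) a + Eop k (fM (Suc t)) (zS t a w) a \<le> fM t a) \<and>
        fM t a = PiM_std c (wS t a) (zS t a (wS t a)) a + Eop k (fM (Suc t)) (zS t a (wS t a)) a) \<and>
     (\<forall>t\<in>{1..T}. \<forall>a\<in>Aset a1. fR t a = fRh t a (wS t a))"

definition is_SMPS ::
  "real \<Rightarrow> real \<Rightarrow> real \<Rightarrow> real \<Rightarrow> real set \<Rightarrow> nat
   \<Rightarrow> (nat \<Rightarrow> real \<Rightarrow> real) \<Rightarrow> (nat \<Rightarrow> real \<Rightarrow> real \<Rightarrow> real) \<Rightarrow> bool" where
  "is_SMPS p c k a1 W T wS zS \<longleftrightarrow> (\<exists>fR fRh fM. SMPS_with p c k a1 W T wS zS fR fRh fM)"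

end

theory Submission
  imports Defs "HOL-Probability.Probability" "HOL-Real_Asymp.Real_Asymp"
begin


lemma predG_alt:
  assumes "k > 0" "b > 0"
  shows "predG k a b y = 1 - (b / (b + (max y 0) powr k)) powr a"
  using assms by (auto simp: predG_def ell_def max_def)

lemma predG_cont:
  assumes "k > 0" "b > 0"
  shows "continuous_on UNIV (predG k a b)"
proof -
  have c1: "continuous_on UNIV (\<lambda>y. (max y 0) powr k)"
    by (intro continuous_on_powr' continuous_intros) (use assms in auto)
  have pos: "b + (max y 0) powr k > 0" for y using assms by (simp add: add_pos_nonneg)
  have c2: "continuous_on UNIV (\<lambda>y. b / (b + (max y 0) powr k))"
    by (intro continuous_intros c1) (use pos in \<open>auto simp: less_imp_neq[symmetric]\<close>)
  have "continuous_on UNIV (\<lambda>y. 1 - (b / (b + (max y 0) powr k)) powr a)"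
    apply (intro continuous_on_diff continuous_on_const)
    apply (rule continuous_on_powr[OF c2 continuous_on_const])
    using pos assms by (auto simp: less_imp_neq[symmetric] divide_pos_pos)
  then show ?thesis using predG_alt[OF assms(1,2)] by (simp add: fun_eq_iff[symmetric]) 
qed

lemma predG_mono:
  assumes "k > 0" "b > 0" "a \<ge> 0" "x \<le> y"
  shows "predG k a b x \<le> predG k a b y"
proof -
  have "(max x 0) powr k \<le> (max y 0) powr k" using assms by (intro powr_mono2) auto
  then have "b / (b + (max y 0) powr k) \<le> b / (b + (max x 0) powr k)"
    using assms by (intro divide_left_mono) (auto intro!: add_pos_nonneg mult_pos_pos)
  then have "(b / (b + (max y 0) powr k)) powr a \<le> (b / (b + (max x 0) powr k)) powr a"
    using assms by (intro powr_mono2) (auto intro!: divide_nonneg_nonneg add_nonneg_nonneg)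
  then show ?thesis using predG_alt[OF assms(1,2)] by simp
qed

lemma predG_bot:
  "(predG k a b \<longlongrightarrow> 0) at_bot"
proof (rule tendsto_eventually)
  show "\<forall>\<^sub>F x in at_bot. predG k a b x = 0"
    unfolding eventually_at_bot_dense by (rule exI[of _ 0]) (auto simp: predG_def)
qed

lemma predG_top:
  assumes "k > 0" "b > 0" "a > 0"
  shows "(predG k a b \<longlongrightarrow> 1) at_top"
proof -
  have "((\<lambda>y. 1 - (b / (b + y powr k)) powr a) \<longlongrightarrow> 1) at_top"
    using assms by real_asymp
  then show ?thesis
    apply (rule filterlim_cong[THEN iffD1, rotated 3]) apply simp apply simp
    unfolding eventually_at_top_linorder by (rule exI[of _ 0]) (auto simp: predG_def ell_def)
qed


lemma predG_zero: "b > 0 \<Longrightarrow> predG k a b 0 = 0"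
  by (simp add: predG_def ell_def)

lemma sets_pd [simp, measurable_cong]: "sets (pred_dist k a b) = sets borel"
  by (simp add: pred_dist_def)
lemma space_pd [simp]: "space (pred_dist k a b) = UNIV"
  by (simp add: pred_dist_def)

lemma pd_rd:
  assumes "k > 0" "b > 0" "a > 0"
  shows "real_distribution (pred_dist k a b)"
  unfolding pred_dist_def
proof (rule real_distribution_interval_measure)
  show "predG k a b x \<le> predG k a b y" if "x \<le> y" for x y
    using predG_mono[of k b a x y] assms that by simp
  show "continuous (at_right x) (predG k a b)" for x
  proof -
    have "isCont (predG k a b) x" using predG_cont[OF assms(1,2), of a]
      by (simp add: continuous_on_eq_continuous_within)
    then show ?thesis by (rule continuous_at_imp_continuous_at_within)
  qed
qed (use predG_bot predG_top assms in auto)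

lemma pd_cdf:
  assumes "k > 0" "b > 0" "a > 0"
  shows "cdf (pred_dist k a b) = predG k a b"
  unfolding pred_dist_def
proof (rule cdf_interval_measure)
  show "predG k a b x \<le> predG k a b y" if "x \<le> y" for x y
    using predG_mono[of k b a x y] assms that by simp
  show "continuous (at_right x) (predG k a b)" for x
  proof -
    have "isCont (predG k a b) x" using predG_cont[OF assms(1,2), of a]
      by (simp add: continuous_on_eq_continuous_within)
    then show ?thesis by (rule continuous_at_imp_continuous_at_within)
  qed
qed (use predG_bot in auto)

lemma pd_Iic:
  assumes "k > 0" "b > 0" "a > 0"
  shows "measure (pred_dist k a b) {..x} = predG k a b x"
  using pd_cdf[OF assms] by (metis cdf_def)

lemma pd_single:
  assumes "k > 0" "b > 0" "a > 0"
  shows "measure (pred_dist k a b) {x} = 0"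
proof -
  interpret finite_borel_measure "pred_dist k a b"
    using pd_rd[OF assms] real_distribution.finite_borel_measure_M by blast
  show ?thesis using isCont_cdf[of x] pd_cdf[OF assms] predG_cont[OF assms(1,2)]
    by (simp add: continuous_on_eq_continuous_within)
qed

lemma pd_Iio:
  assumes "k > 0" "b > 0" "a > 0"
  shows "measure (pred_dist k a b) {..<x} = predG k a b x"
proof -
  interpret prob_space "pred_dist k a b"
    using pd_rd[OF assms] real_distribution.axioms(1) by blast
  have "{..<x} = {..x} - {x}" by auto
  then have "measure (pred_dist k a b) {..<x} = measure (pred_dist k a b) {..x} - measure (pred_dist k a b) {x}"
    by (simp add: finite_measure_Diff)
  then show ?thesis using pd_Iic[OF assms] pd_single[OF assms] by simp
qed

lemma pd_Ioi:
  assumes "k > 0" "b > 0" "a > 0"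
  shows "measure (pred_dist k a b) {x<..} = 1 - predG k a b x"
proof -
  interpret prob_space "pred_dist k a b"
    using pd_rd[OF assms] real_distribution.axioms(1) by blast
  have "{x<..} = space (pred_dist k a b) - {..x}" by (auto simp: pred_dist_def)
  then show ?thesis using prob_compl[of "{..x}"] pd_Iic[OF assms] by (simp add: pred_dist_def)
qed

lemma pd_Ici:
  assumes "k > 0" "b > 0" "a > 0"
  shows "measure (pred_dist k a b) {x..} = 1 - predG k a b x"
proof -
  interpret prob_space "pred_dist k a b"
    using pd_rd[OF assms] real_distribution.axioms(1) by blast
  have "{x..} = space (pred_dist k a b) - {..<x}" by (auto simp: pred_dist_def)
  then show ?thesis using prob_compl[of "{..<x}"] pd_Iio[OF assms] by (simp add: pred_dist_def)
qed

lemma pd_AE_nonneg: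
  assumes "k > 0" "b > 0" "a > 0"
  shows "AE d in pred_dist k a b. 0 \<le> d"
proof -
  interpret prob_space "pred_dist k a b"
    using pd_rd[OF assms] real_distribution.axioms(1) by blast
  have "emeasure (pred_dist k a b) {..<0} = 0"
    using pd_Iio[OF assms, of 0] predG_zero[OF assms(2)] by (simp add: emeasure_eq_measure)
  then have "{..<0} \<in> null_sets (pred_dist k a b)" by (intro null_setsI) auto
  from AE_not_in[OF this] show ?thesis by (rule eventually_mono) auto
qed

lemma pd_AE_neq:
  assumes "k > 0" "b > 0" "a > 0"
  shows "AE d in pred_dist k a b. d \<noteq> q"
proof -
  interpret prob_space "pred_dist k a b"
    using pd_rd[OF assms] real_distribution.axioms(1) by blast
  have "emeasure (pred_dist k a b) {q} = 0"
    using pd_single[OF assms, of q] by (simp add: emeasure_eq_measure)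
  then have "{q} \<in> null_sets (pred_dist k a b)" by (intro null_setsI) auto
  from AE_not_in[OF this] show ?thesis by (rule eventually_mono) auto
qed



definition gd :: "real \<Rightarrow> real \<Rightarrow> real \<Rightarrow> real \<Rightarrow> real" where
  "gd k a b x = (if x \<le> 0 then 0 else a * k * b powr a * x powr (k - 1) * (b + x powr k) powr (-(a + 1)))"

lemma gd_nonneg: "a \<ge> 0 \<Longrightarrow> k \<ge> 0 \<Longrightarrow> b \<ge> 0 \<Longrightarrow> gd k a b x \<ge> 0"
  by (auto simp: gd_def)

lemma gd_meas [measurable]: "gd k a b \<in> borel_measurable borel"
  unfolding gd_def by measurable

lemma predG_pos_form:
  assumes "k > 0" "b > 0" "y \<ge> 0"
  shows "predG k a b y = 1 - b powr a * (b + y powr k) powr (-a)"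
proof -
  have B: "b + y powr k > 0" using assms by (simp add: add_pos_nonneg)
  have e1: "(b / (b + y powr k)) powr a = b powr a / (b + y powr k) powr a"
    by (rule powr_divide)
  have e2: "(b + y powr k) powr (-a) = inverse ((b + y powr k) powr a)"
    by (rule powr_minus)
  show ?thesis using assms unfolding predG_def ell_def e1 e2
    by (simp add: divide_inverse)
qed

lemma predG_deriv:
  assumes "k > 0" "b > 0" "x > 0"
  shows "(predG k a b has_real_derivative gd k a b x) (at x)"
proof -
  define F0 where "F0 y = 1 - b powr a * (b + y powr k) powr (-a)" for y
  have pos: "b + x powr k > 0" using assms by (simp add: add_pos_nonneg)
  have d1: "((\<lambda>y. b + y powr k) has_real_derivative k * x powr (k - 1)) (at x)"
    using assms by (auto intro!: derivative_eq_intros)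
  have e: "-a - real 1 = -(a+1)" by simp
  have d2: "((\<lambda>y. (b + y powr k) powr (-a)) has_real_derivative
      (-a) * (b + x powr k) powr (-(a+1)) * (k * x powr (k - 1))) (at x)"
    using DERIV_fun_powr[OF d1 pos, of "-a"] unfolding e .
  have "(F0 has_real_derivative 0 - (b powr a * ((-a) * (b + x powr k) powr (-(a+1)) * (k * x powr (k - 1))))) (at x)"
    unfolding F0_def by (intro DERIV_diff DERIV_const DERIV_cmult d2)
  moreover have "0 - (b powr a * ((-a) * (b + x powr k) powr (-(a+1)) * (k * x powr (k - 1)))) = gd k a b x"
    using assms by (simp add: gd_def algebra_simps)
  ultimately have "(F0 has_real_derivative gd k a b x) (at x)" by simp
  then show ?thesis
  proof (rule has_field_derivative_transform_within_open[where S="{0<..}"])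
    show "F0 y = predG k a b y" if "y \<in> {0<..}" for y
      using predG_pos_form[OF assms(1,2), of y] that by (simp add: F0_def)
  qed (use assms in auto)
qed


lemma predG_rc:
  assumes "k > 0" "b > 0"
  shows "continuous (at_right x) (predG k a b)"
proof -
  have "isCont (predG k a b) x" using predG_cont[OF assms(1,2), of a]
    by (simp add: continuous_on_eq_continuous_within)
  then show "continuous (at_right x) (predG k a b)" by (rule continuous_at_imp_continuous_at_within)
qed

lemma gd_has_integral:
  assumes "k > 0" "b > 0" "x \<le> y"
  shows "((\<lambda>t. gd k a b t * indicator {x..y} t) has_integral (predG k a b y - predG k a b x)) UNIV"
proof (cases "y \<le> 0")
  case True
  have z: "predG k a b t = 0" if "t \<le> 0" for t
    using that assms predG_zero[OF assms(2)] by (cases "t = 0") (auto simp: predG_def)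
  have "(\<lambda>t. gd k a b t * indicator {x..y} t) = (\<lambda>_. 0)"
    using True by (auto simp: fun_eq_iff gd_def indicator_def)
  moreover have "predG k a b y = 0" "predG k a b x = 0"
    using True assms z by auto
  ultimately show ?thesis by simp
next
  case False
  define x' where "x' = max x 0"
  have xy: "x' \<le> y" using False assms by (simp add: x'_def)
  have fi: "(gd k a b has_integral (predG k a b y - predG k a b x')) {x'..y}"
  proof (rule fundamental_theorem_of_calculus_interior[OF xy])
    show "continuous_on {x'..y} (predG k a b)"
      using predG_cont[OF assms(1,2)] continuous_on_subset by blast
    show "(predG k a b has_vector_derivative gd k a b t) (at t)" if "t \<in> {x'<..<y}" for t
      using predG_deriv[OF assms(1,2), of t] that
      by (auto simp: x'_def has_real_derivative_iff_has_vector_derivative)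
  qed
  have e1: "predG k a b x' = predG k a b x"
    using assms by (auto simp: x'_def max_def predG_def ell_def)
  have e2: "(\<lambda>t. if t \<in> {x'..y} then gd k a b t else 0) = (\<lambda>t. gd k a b t * indicator {x..y} t)"
    using assms by (auto simp: fun_eq_iff x'_def gd_def indicator_def max_def)
  show ?thesis using fi has_integral_restrict_UNIV[of "{x'..y}" "gd k a b"] e1 e2 by simp
qed

lemma pd_density:
  assumes "k > 0" "b > 0" "a > 0"
  shows "pred_dist k a b = density lborel (gd k a b)"
proof (rule measure_eqI_generator_eq[where \<Omega>=UNIV and E="range (\<lambda>(a, b). {a<..b::real})"
      and A="\<lambda>i. {- real i<..real i}"])
  have mono: "\<And>x y. x \<le> y \<Longrightarrow> predG k a b x \<le> predG k a b y"
    using predG_mono[of k b a] assms by simp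
  have rc: "\<And>x. continuous (at_right x) (predG k a b)"
  proof -
    fix x
    have "isCont (predG k a b) x" using predG_cont[OF assms(1,2), of a]
      by (simp add: continuous_on_eq_continuous_within)
    then show "continuous (at_right x) (predG k a b)" by (rule continuous_at_imp_continuous_at_within)
  qed
  fix X assume "X \<in> range (\<lambda>(a, b). {a<..b::real})"
  then obtain x y where Xeq: "X = {x<..y}" by auto
  show "emeasure (pred_dist k a b) X = emeasure (density lborel (gd k a b)) X"
  proof (cases "x \<le> y")
    case True
    have "emeasure (pred_dist k a b) X = predG k a b y - predG k a b x"
      unfolding pred_dist_def Xeq using mono rc True by (intro emeasure_interval_measure_Ioc) auto
    moreover have "emeasure (density lborel (gd k a b)) X = (\<integral>\<^sup>+ t. gd k a b t * indicator {x<..y} t \<partial>lborel)"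
      unfolding Xeq by (subst emeasure_density) (auto simp: ennreal_mult' gd_nonneg assms less_imp_le intro!: nn_integral_cong split: split_indicator)
    moreover have "(\<integral>\<^sup>+ t. gd k a b t * indicator {x<..y} t \<partial>lborel) = (\<integral>\<^sup>+ t. gd k a b t * indicator {x..y} t \<partial>lborel)"
      by (intro nn_integral_cong_AE eventually_mono[OF AE_lborel_singleton[of x]]) (auto split: split_indicator)
    moreover have "(\<integral>\<^sup>+ t. gd k a b t * indicator {x..y} t \<partial>lborel) = predG k a b y - predG k a b x"
      by (intro nn_integral_has_integral_lborel gd_has_integral True assms)
         (auto simp: gd_nonneg assms less_imp_le)
    ultimately show ?thesis by simp
  next
    case False
    then show ?thesis by (simp add: Xeq)
  qed
next
  show "Int_stable (range (\<lambda>(a, b). {a<..b::real}))"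
    by (auto simp: Int_stable_def)
  show "sets (pred_dist k a b) = sigma_sets UNIV (range (\<lambda>(a, b). {a<..b::real}))"
    by (simp add: borel_sigma_sets_Ioc)
  show "sets (density lborel (gd k a b)) = sigma_sets UNIV (range (\<lambda>(a, b). {a<..b::real}))"
    by (simp add: borel_sigma_sets_Ioc)
  show "emeasure (pred_dist k a b) {- real i<..real i} \<noteq> \<infinity>" for i
    unfolding pred_dist_def
    by (subst emeasure_interval_measure_Ioc) (auto intro: predG_mono[OF assms(1,2) less_imp_le[OF assms(3)]] predG_rc[OF assms(1,2)])
qed (auto simp: UN_Ioc_eq_UNIV)


lemma predG_scale:
  assumes "k > 0" "b > 0"
  shows "predG k a 1 (x / b powr (1/k)) = predG k a b x"
proof -
  define s where "s = b powr (1/k)"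
  have s: "s > 0" using assms by (simp add: s_def)
  have sk: "s powr k = b" using assms by (simp add: s_def powr_powr)
  show ?thesis
  proof (cases "x < 0")
    case True
    then have "x / s < 0" using s by (simp add: divide_neg_pos)
    then show ?thesis using True by (simp add: predG_def s_def)
  next
    case False
    then have "x / s \<ge> 0" using s by simp
    moreover have "(x / s) powr k = x powr k / b" using False s sk by (simp add: powr_divide)
    moreover have "1 / (1 + x powr k / b) = b / (b + x powr k)"
      using assms by (simp add: field_simps add_pos_nonneg)
    ultimately show ?thesis using False unfolding s_def[symmetric] by (simp add: predG_def ell_def)
  qed
qed

lemma one_minus_predG:
  assumes "k > 0" "b > 0" "q \<ge> 0"
  shows "1 - predG k a b q = (b / (b + q powr k)) powr a"
  using assms by (simp add: predG_def ell_def)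

lemma powr_shift:
  fixes b B a k :: real
  assumes "b > 0" "B > 0"
  shows "(b / B) powr a * B powr (1/k) = b powr (1/k) * (b / B) powr (a - 1/k)"
proof -
  have "(b / B) powr (a - 1/k) = (b / B) powr a / (b / B) powr (1/k)"
    by (rule powr_diff)
  moreover have "(b / B) powr (1/k) = b powr (1/k) / B powr (1/k)" by (rule powr_divide)
  ultimately show ?thesis using assms by (simp add: field_simps)
qed

lemma gd_shift:
  assumes "k > 0" "b > 0" "a - 1/k > 0"
  shows "(b + d powr k) powr (1/k) * gd k a b d = (a * b powr (1/k) / (a - 1/k)) * gd k (a - 1/k) b d"
proof (cases "d \<le> 0")
  case True then show ?thesis by (simp add: gd_def)
next
  case False
  define B where "B = b + d powr k"
  define a' where "a' = a - 1/k"
  have B: "B > 0" using assms by (simp add: B_def add_pos_nonneg)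
  have e1: "b powr (1/k) * b powr a' = b powr a" by (simp add: powr_add[symmetric] a'_def)
  have ee: "1/k + -(a+1) = -(a' + 1)" by (simp add: a'_def)
  have e2: "B powr (1/k) * B powr (-(a+1)) = B powr (-(a' + 1))"
    using powr_add[of B "1/k" "-(a+1)"] unfolding ee by simp
  have "(a * b powr (1/k) / a') * (a' * k * b powr a' * d powr (k - 1) * B powr (-(a' + 1)))
      = a * k * (b powr (1/k) * b powr a') * d powr (k - 1) * B powr (-(a' + 1))"
    using assms by (simp add: a'_def field_simps)
  also have "\<dots> = B powr (1/k) * (a * k * b powr a * d powr (k - 1) * B powr (-(a+1)))"
    unfolding e1 e2[symmetric] by (simp add: field_simps)
  finally show ?thesis using False by (simp add: gd_def B_def a'_def)
qed


lemma pd_prob: "k > 0 \<Longrightarrow> b > 0 \<Longrightarrow> a > 0 \<Longrightarrow> prob_space (pred_dist k a b)"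
  using pd_rd real_distribution.axioms(1) by blast

lemma pd_scale:
  assumes "k > 0" "b > 0" "a > 0"
  shows "pred_dist k a b = distr (pred_dist k a 1) borel (\<lambda>u. b powr (1/k) * u)"
proof (rule cdf_unique)
  show "real_distribution (pred_dist k a b)" using pd_rd assms by blast
  interpret P: prob_space "pred_dist k a 1" using pd_prob assms by simp
  show "real_distribution (distr (pred_dist k a 1) borel (\<lambda>u. b powr (1/k) * u))"
    by (intro P.real_distribution_distr) simp
  define s where "s = b powr (1/k)"
  have s: "s > 0" using assms by (simp add: s_def)
  show "cdf (pred_dist k a b) = cdf (distr (pred_dist k a 1) borel (\<lambda>u. b powr (1/k) * u))"
  proof
    fix x
    have pre: "(*) s -` {..x} = {..x / s}"
      using s by (auto simp: pos_le_divide_eq mult.commute)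
    have "cdf (distr (pred_dist k a 1) borel (\<lambda>u. s * u)) x = measure (pred_dist k a 1) {..x / s}"
      unfolding cdf_def by (subst measure_distr) (auto simp: pre)
    also have "\<dots> = predG k a b x" using pd_Iic[of k 1 a] assms predG_scale[OF assms(1,2)] by (simp add: s_def)
    finally show "cdf (pred_dist k a b) x = cdf (distr (pred_dist k a 1) borel (\<lambda>u. b powr (1/k) * u)) x"
      using pd_cdf[OF assms] by (simp add: s_def)
  qed
qed

lemma Ex_min_scale:
  assumes "k > 0" "b > 0" "a > 0"
  shows "Ex k a b (\<lambda>d. min d q) = b powr (1/k) * Ex k a 1 (\<lambda>u. min u (q / b powr (1/k)))"
proof -
  define s where "s = b powr (1/k)"
  have s: "s > 0" using assms by (simp add: s_def)
  have pw: "min (s * u) q = s * min u (q / s)" for u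
    using s by (auto simp: min_def pos_le_divide_eq mult.commute)
  show ?thesis
    unfolding Ex_def using assms
    by (subst pd_scale) (auto simp: integral_distr pw[unfolded s_def])
qed

lemma bounded_integrable:
  fixes f :: "'a \<Rightarrow> real" and B :: real
  assumes "prob_space M" "f \<in> borel_measurable M" "AE x in M. \<bar>f x\<bar> \<le> B"
  shows "integrable M f"
proof -
  interpret prob_space M by fact
  show ?thesis using assms(2,3) by (intro integrable_const_bound[where B=B]) auto
qed

lemma min_integrable:
  assumes "k > 0" "b > 0" "a > 0"
  shows "integrable (pred_dist k a b) (\<lambda>d. min d z)"
  by (rule bounded_integrable[OF pd_prob[OF assms], where B="\<bar>z\<bar>"])
     (auto intro: eventually_mono[OF pd_AE_nonneg[OF assms]])

lemma Ex_min_lip1: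
  assumes "k > 0" "b > 0" "a > 0"
  shows "Ex k a b (\<lambda>d. min d z) \<le> Ex k a b (\<lambda>d. min d z') + \<bar>z - z'\<bar>"
proof -
  interpret prob_space "pred_dist k a b" using pd_prob assms by simp
  have "Ex k a b (\<lambda>d. min d z) \<le> (\<integral>d. min d z' + \<bar>z - z'\<bar> \<partial>pred_dist k a b)"
    unfolding Ex_def by (intro integral_mono min_integrable assms Bochner_Integration.integrable_add) auto
  also have "\<dots> = Ex k a b (\<lambda>d. min d z') + \<bar>z - z'\<bar>"
    unfolding Ex_def using prob_space by (subst Bochner_Integration.integral_add) (auto intro: min_integrable assms)
  finally show ?thesis .
qed

lemma Ex_min_lip:
  assumes "k > 0" "b > 0" "a > 0"
  shows "\<bar>Ex k a b (\<lambda>d. min d z) - Ex k a b (\<lambda>d. min d z')\<bar> \<le> \<bar>z - z'\<bar>"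
  using Ex_min_lip1[OF assms, of z z'] Ex_min_lip1[OF assms, of z' z] by linarith

lemma Ex_min_0:
  assumes "k > 0" "b > 0" "a > 0"
  shows "Ex k a b (\<lambda>d. min d 0) = 0"
proof -
  have "Ex k a b (\<lambda>d. min d 0) = (\<integral>d. 0 \<partial>pred_dist k a b)"
    unfolding Ex_def by (intro integral_cong_AE) (auto intro: eventually_mono[OF pd_AE_nonneg[OF assms]])
  then show ?thesis by simp
qed

lemma Ex_min_bound:
  assumes "k > 0" "b > 0" "a > 0" "z \<ge> 0" "z0 \<ge> 0"
  shows "Ex k a b (\<lambda>d. min d z) \<le> z0 + z * (1 - predG k a b z0)"
proof -
  interpret prob_space "pred_dist k a b" using pd_prob assms by simp
  have ii: "integrable (pred_dist k a b) (indicator {z0<..} :: real \<Rightarrow> real)"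
    by (rule bounded_integrable[OF pd_prob[OF assms(1-3)], where B=1]) (auto split: split_indicator)
  have int2: "integrable (pred_dist k a b) (\<lambda>d. z0 + z * indicator {z0<..} d)"
    by (rule bounded_integrable[OF pd_prob[OF assms(1-3)], where B="z0 + z"])
       (use assms in \<open>auto split: split_indicator\<close>)
  have "Ex k a b (\<lambda>d. min d z) \<le> (\<integral>d. z0 + z * indicator {z0<..} d \<partial>pred_dist k a b)"
    unfolding Ex_def
    by (intro integral_mono_AE min_integrable assms(1-3) int2 eventually_mono[OF pd_AE_nonneg[OF assms(1-3)]])
       (use assms in \<open>auto split: split_indicator\<close>)
  also have "\<dots> = z0 + z * measure (pred_dist k a b) {z0<..}"
    using prob_space ii by (subst Bochner_Integration.integral_add) auto
  also have "\<dots> = z0 + z * (1 - predG k a b z0)" using pd_Ioi[OF assms(1-3)] by simp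
  finally show ?thesis .
qed


lemma Cont_eq:
  fixes f :: "real \<Rightarrow> real"
  assumes k: "k > 0" and b: "b > 0" and a1: "a > 1" and ak: "a - 1/k > 0" and q: "q \<ge> 0"
  shows "ContInt k (\<lambda>a b. b powr (1/k) / (a - 1) * f a) a b q"
    and "Cont k (\<lambda>a b. b powr (1/k) / (a - 1) * f a) a b q
           = b powr (1/k) / (a - 1) * Eop k f (q / b powr (1/k)) a"
proof -
  define V where "V = (\<lambda>a b. b powr (1/k) / (a - 1) * f a)"
  have a0: "a > 0" using a1 by simp
  define P where "P = pred_dist k a b"
  interpret prob_space P using pd_prob k b a0 by (simp add: P_def)
  define s where "s = b powr (1/k)"
  have s: "s > 0" using b by (simp add: s_def)
  define a' where "a' = a - 1/k"
  have a': "a' > 0" using ak by (simp add: a'_def)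
  define h1 where "h1 d = indicator {0..<q} d * (b + d powr k) powr (1/k)" for d
  define c2 where "c2 = (b + q powr k) powr (1/k) / (a - 1) * f a"
  define h where "h d = case_prod V (Phi k a b q d)" for d
  have hif: "h = (\<lambda>d. if min d q < q then (b + (min d q) powr k) powr (1/k) / (a + 1 - 1) * f (a + 1)
                 else (b + (min d q) powr k) powr (1/k) / (a - 1) * f a)"
    by (auto simp: fun_eq_iff h_def V_def Phi_def ell_def)
  have h_meas: "h \<in> borel_measurable P" unfolding hif P_def by measurable
  have h1_meas: "h1 \<in> borel_measurable borel" unfolding h1_def by measurable
  have hform: "AE d in P. h d = h1 d * (f (a + 1) / a) + indicator {q<..} d * c2"
  proof -
  have "AE d in P. 0 \<le> d \<and> d \<noteq> q"
    using AE_conjI[OF pd_AE_nonneg[OF k b a0] pd_AE_neq[OF k b a0, of q]] unfolding P_def .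
  then show ?thesis
  proof (rule eventually_mono)
    fix d :: real assume "0 \<le> d \<and> d \<noteq> q"
    then have d0: "0 \<le> d" and dq: "d \<noteq> q" by auto
    show "h d = h1 d * (f (a + 1) / a) + indicator {q<..} d * c2"
    proof (cases "d < q")
      case True then show ?thesis using d0 by (simp add: hif h1_def c2_def)
    next
      case False then have "q < d" using dq by simp
      then show ?thesis using d0 by (simp add: hif h1_def c2_def)
    qed
  qed
  qed
  have h1_bound: "\<bar>h1 d\<bar> \<le> (b + q powr k) powr (1/k)" for d
  proof (cases "d \<in> {0..<q}")
    case True
    then have "d powr k \<le> q powr k" using k by (intro powr_mono2) auto
    then have "(b + d powr k) powr (1/k) \<le> (b + q powr k) powr (1/k)"
      using k b by (intro powr_mono2) (auto intro: add_pos_nonneg)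
    then show ?thesis using True by (simp add: h1_def)
  next
    case False then show ?thesis by (simp add: h1_def)
  qed
  have h1_int: "integrable P h1"
    by (rule bounded_integrable[where B="(b + q powr k) powr (1/k)"])
       (use h1_bound h1_meas pd_prob[OF k b a0] in \<open>auto simp: P_def\<close>)
  have i_int: "integrable P (indicator {q<..} :: real \<Rightarrow> real)"
    by (rule bounded_integrable[where B=1]) (use pd_prob[OF k b a0] in \<open>auto simp: P_def split: split_indicator\<close>)
  have g_int: "integrable P (\<lambda>d. h1 d * (f (a + 1) / a) + indicator {q<..} d * c2)"
    using h1_int i_int by auto
  show "ContInt k (\<lambda>a b. b powr (1/k) / (a - 1) * f a) a b q"
    unfolding ContInt_def V_def[symmetric] h_def[symmetric] P_def[symmetric]
    by (rule integrable_cong_AE_imp[OF g_int h_meas]) (use hform in \<open>auto elim: AE_mp\<close>)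
  have pw: "gd k a b d * h1 d = (a * s / a') * (gd k a' b d * indicator {..<q} d)" for d
  proof (cases "d < 0")
    case True then show ?thesis by (simp add: gd_def h1_def)
  next
    case False
    then show ?thesis using gd_shift[OF k b ak, of d]
      by (auto simp: h1_def a'_def s_def mult.commute split: split_indicator)
  qed
  have "integral\<^sup>L P h1 = (\<integral>d. gd k a b d * h1 d \<partial>lborel)"
    unfolding P_def pd_density[OF k b a0]
    by (subst integral_density) (auto simp: gd_nonneg k b a0 less_imp_le h1_meas)
  also have "\<dots> = (a * s / a') * (\<integral>d. gd k a' b d * indicator {..<q} d \<partial>lborel)"
    unfolding pw by simp
  also have "(\<integral>d. gd k a' b d * indicator {..<q} d \<partial>lborel) = measure (pred_dist k a' b) {..<q}"
  proof -
    have "measure (density lborel (gd k a' b)) {..<q} = (\<integral>d. indicator {..<q} d \<partial>density lborel (gd k a' b))"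
      by simp
    also have "\<dots> = (\<integral>d. gd k a' b d *\<^sub>R indicator {..<q} d \<partial>lborel)"
      by (rule integral_density) (auto simp: gd_nonneg k b a' less_imp_le)
    finally show ?thesis using pd_density[OF k b a'[unfolded a'_def]] unfolding a'_def by simp
  qed
  also have "\<dots> = predG k a' b q" using pd_Iio[OF k b a'[unfolded a'_def], folded a'_def] by simp
  finally have I1: "integral\<^sup>L P h1 = (a * s / a') * predG k a' b q" .
  have "Cont k V a b q = integral\<^sup>L P h"
    unfolding Cont_def Ex_def h_def P_def ..
  also have "\<dots> = (\<integral>d. h1 d * (f (a + 1) / a) + indicator {q<..} d * c2 \<partial>P)"
    by (rule integral_cong_AE[OF h_meas]) (use hform g_int in auto)
  also have "\<dots> = integral\<^sup>L P h1 * (f (a + 1) / a) + measure P {q<..} * c2"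
    using h1_int i_int by (simp add: P_def)
  also have "\<dots> = (a * s / a') * predG k a' b q * (f (a + 1) / a) + (1 - predG k a b q) * c2"
    using I1 pd_Ioi[OF k b a0] by (simp add: P_def)
  finally have C1: "Cont k V a b q = (a * s / a') * predG k a' b q * (f (a + 1) / a) + (1 - predG k a b q) * c2" .
  have G1: "predG k a' 1 (q / s) = predG k a' b q" using predG_scale[OF k b] by (simp add: s_def)
  have Bp: "b + q powr k > 0" using b by (simp add: add_pos_nonneg)
  have G2: "(1 - predG k a b q) * (b + q powr k) powr (1/k) = s * (1 - predG k a' b q)"
    using one_minus_predG[OF k b q, of a] one_minus_predG[OF k b q, of a'] powr_shift[OF b Bp, of a k]
    by (simp add: s_def a'_def)
  have "b powr (1/k) / (a - 1) * Eop k f (q / b powr (1/k)) a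
      = s / (a - 1) * ((a - 1) / a' * predG k a' b q * f (a + 1) + (1 - predG k a' b q) * f a)"
    unfolding Eop_def s_def[symmetric] a'_def[symmetric] G1 ..
  also have "\<dots> = (a * s / a') * predG k a' b q * (f (a + 1) / a) + (1 - predG k a b q) * c2"
  proof -
    have "(1 - predG k a b q) * c2 = ((1 - predG k a b q) * (b + q powr k) powr (1/k)) / (a - 1) * f a"
      unfolding c2_def by simp
    also have "\<dots> = s * (1 - predG k a' b q) / (a - 1) * f a" by (simp only: G2)
    finally have G3: "(1 - predG k a b q) * c2 = s * (1 - predG k a' b q) / (a - 1) * f a" .
    show ?thesis unfolding G3 using a1 a' by (simp add: field_simps)
  qed
  finally show "Cont k (\<lambda>a b. b powr (1/k) / (a - 1) * f a) a b q
           = b powr (1/k) / (a - 1) * Eop k f (q / b powr (1/k)) a"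
    using C1 unfolding V_def by simp
qed



lemma total_R:
  fixes f :: "real \<Rightarrow> real"
  assumes k: "k > 0" and b: "b > 0" and a1: "a > 1" and ak: "a - 1/k > 0" and q: "q \<ge> 0"
  shows "PiR p k w q a b + Cont k (\<lambda>a b. b powr (1/k) / (a - 1) * f a) a b q
     = b powr (1/k) / (a - 1) * (PiR_std p k w (q / b powr (1/k)) a + Eop k f (q / b powr (1/k)) a)"
proof -
  have a0: "a > 0" using a1 by simp
  define s where "s = b powr (1/k)"
  have s: "s > 0" using b by (simp add: s_def)
  have "PiR p k w q a b = s / (a - 1) * PiR_std p k w (q / s) a"
    unfolding PiR_def PiR_std_def Ex_min_scale[OF k b a0] s_def[symmetric]
    using s a1 by (simp add: field_simps)
  then show ?thesis using Cont_eq(2)[OF k b a1 ak q, of f] by (simp add: s_def distrib_left)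
qed

lemma total_M:
  fixes f :: "real \<Rightarrow> real"
  assumes k: "k > 0" and b: "b > 0" and a1: "a > 1" and ak: "a - 1/k > 0" and q: "q \<ge> 0"
  shows "PiM c w q + Cont k (\<lambda>a b. b powr (1/k) / (a - 1) * f a) a b q
     = b powr (1/k) / (a - 1) * (PiM_std c w (q / b powr (1/k)) a + Eop k f (q / b powr (1/k)) a)"
proof -
  define s where "s = b powr (1/k)"
  have s: "s > 0" using b by (simp add: s_def)
  have "PiM c w q = s / (a - 1) * PiM_std c w (q / s) a"
    unfolding PiM_def PiM_std_def using s a1 by (simp add: field_simps)
  then show ?thesis using Cont_eq(2)[OF k b a1 ak q, of f] by (simp add: s_def distrib_left)
qed

lemma Aset_ge: "a \<in> Aset a1 \<Longrightarrow> a \<ge> a1"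
  by (auto simp: Aset_def)

lemma Aset_Suc: "a \<in> Aset a1 \<Longrightarrow> a + 1 \<in> Aset a1"
proof -
  assume "a \<in> Aset a1"
  then obtain n where "a = a1 + real n" by (auto simp: Aset_def)
  then have "a + 1 = a1 + real (Suc n)" by simp
  then show ?thesis unfolding Aset_def by blast
qed

lemma meas_q:
  fixes g :: "real \<Rightarrow> real"
  assumes "g \<in> borel_measurable (restrict_space borel W)"
  shows "(\<lambda>(b, w). b powr (1/k) * g w) \<in> borel_measurable (restrict_space borel (B \<times> W))"
proof -
  have sn: "snd \<in> measurable (restrict_space borel (B \<times> W)) (restrict_space borel W)"
    by (rule measurable_restrict_space3) (auto simp: borel_prod[symmetric])
  have m1: "(\<lambda>x. g (snd x)) \<in> borel_measurable (restrict_space borel (B \<times> W))"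
    using measurable_compose[OF sn assms] .
  have m2: "(\<lambda>x::real\<times>real. fst x powr (1/k)) \<in> borel_measurable (restrict_space borel (B \<times> W))"
    by (intro measurable_restrict_space1) (auto simp: borel_prod[symmetric])
  have "(\<lambda>x. fst x powr (1/k) * g (snd x)) \<in> borel_measurable (restrict_space borel (B \<times> W))"
    using m1 m2 by measurable
  then show ?thesis by (simp add: case_prod_beta')
qed

lemma part_c:
  fixes k p c b1 a1 :: real and W :: "real set" and T :: nat
  assumes k: "k > 0" and b1: "b1 > 0" and a1: "a1 > max 1 (1 / k)"
    and S: "SMPS_with p c k a1 W T wS zS fR fRh fM"
  shows "MPE_with p c k a1 b1 W T
              (\<lambda>t a b. wS t a)
              (\<lambda>t a b w. b powr (1 / k) * zS t a w)
              (\<lambda>t a b. b powr (1 / k) / (a - 1) * fR t a)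
              (\<lambda>t a b w. b powr (1 / k) / (a - 1) * fRh t a w)
              (\<lambda>t a b. b powr (1 / k) / (a - 1) * fM t a)"
proof -
  have aA: "a > 1" "a - 1/k > 0" if "a \<in> Aset a1" for a
    using Aset_ge[OF that] a1 by auto
  have bB: "b > 0" if "b \<in> Bset b1" for b using that b1 by (auto simp: Bset_def)
  have S_w: "wS t a \<in> W" and S_meas: "zS t a \<in> borel_measurable (restrict_space borel W)"
    if "t \<in> {1..T}" "a \<in> Aset a1" for t a
    using S that unfolding SMPS_with_def std_strategies_def by blast+
  have S_z: "zS t a w \<ge> 0" if "t \<in> {1..T}" "a \<in> Aset a1" "w \<in> W" for t a w
    using S that unfolding SMPS_with_def std_strategies_def by blast
  have S_T: "fR (T+1) a = 0" "fM (T+1) a = 0" if "a \<in> Aset a1" for a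
    using S that unfolding SMPS_with_def by blast+
  have S_Th: "fRh (T+1) a w = 0" if "a \<in> Aset a1" "w \<in> W" for a w
    using S that unfolding SMPS_with_def by blast
  have S_R: "PiR_std p k w z a + Eop k (fR (Suc t)) z a \<le> fRh t a w"
    if "t \<in> {1..T}" "a \<in> Aset a1" "w \<in> W" "z \<ge> 0" for t a w z
    using S that unfolding SMPS_with_def by blast
  have S_Req: "fRh t a w = PiR_std p k w (zS t a w) a + Eop k (fR (Suc t)) (zS t a w) a"
    if "t \<in> {1..T}" "a \<in> Aset a1" "w \<in> W" for t a w
    using S that unfolding SMPS_with_def by blast
  have S_M: "PiM_std c w (zS t a w) a + Eop k (fM (Suc t)) (zS t a w) a \<le> fM t a"
    if "t \<in> {1..T}" "a \<in> Aset a1" "w \<in> W" for t a w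
    using S that unfolding SMPS_with_def by blast
  have S_Meq: "fM t a = PiM_std c (wS t a) (zS t a (wS t a)) a + Eop k (fM (Suc t)) (zS t a (wS t a)) a"
    if "t \<in> {1..T}" "a \<in> Aset a1" for t a
    using S that unfolding SMPS_with_def by blast
  have S_V: "fR t a = fRh t a (wS t a)" if "t \<in> {1..T}" "a \<in> Aset a1" for t a
    using S that unfolding SMPS_with_def by blast
  have strat: "markov_strategies a1 b1 W T (\<lambda>t a b. wS t a) (\<lambda>t a b w. b powr (1 / k) * zS t a w)"
    unfolding markov_strategies_def
  proof (intro ballI)
    fix t a assume t: "t \<in> {1..T}" and a: "a \<in> Aset a1"
    show "(\<forall>b\<in>Bset b1. wS t a \<in> W) \<and>
          (\<forall>b\<in>Bset b1. \<forall>w\<in>W. 0 \<le> b powr (1 / k) * zS t a w) \<and>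
          (\<lambda>b. wS t a) \<in> borel_measurable (restrict_space borel (Bset b1)) \<and>
          (\<lambda>(b, w). b powr (1 / k) * zS t a w) \<in> borel_measurable (restrict_space borel (Bset b1 \<times> W))"
      using S_w[OF t a] S_z[OF t a] meas_q[OF S_meas[OF t a]] by auto
  qed
  show ?thesis
    unfolding MPE_with_def
  proof (intro conjI strat ballI allI impI)
    fix a b assume a: "a \<in> Aset a1" and b: "b \<in> Bset b1"
    show "b powr (1 / k) / (a - 1) * fR (T + 1) a = 0" using S_T[OF a] by simp
    show "b powr (1 / k) / (a - 1) * fM (T + 1) a = 0" using S_T[OF a] by simp
    fix w assume "w \<in> W"
    then show "b powr (1 / k) / (a - 1) * fRh (T + 1) a w = 0" using S_Th[OF a] by simp
  next
    fix t a b w and q :: real assume t: "t \<in> {1..T}" and a: "a \<in> Aset a1" and b: "b \<in> Bset b1" and w: "w \<in> W"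
      and q: "0 \<le> q"
    show "ContInt k (\<lambda>a b. b powr (1 / k) / (a - 1) * fR (Suc t) a) a b q"
      by (rule Cont_eq(1)[OF k bB[OF b] aA[OF a] q])
    have s: "b powr (1/k) > 0" using bB[OF b] by simp
    have qs: "q / b powr (1/k) \<ge> 0" using q s by simp
    have "PiR_std p k w (q / b powr (1/k)) a + Eop k (fR (Suc t)) (q / b powr (1/k)) a \<le> fRh t a w"
      by (rule S_R[OF t a w qs])
    then show "PiR p k w q a b + Cont k (\<lambda>a b. b powr (1 / k) / (a - 1) * fR (Suc t) a) a b q
          \<le> b powr (1 / k) / (a - 1) * fRh t a w"
      unfolding total_R[OF k bB[OF b] aA[OF a] q] using s aA[OF a]
      by (intro mult_left_mono) auto
  next
    fix t a b w assume t: "t \<in> {1..T}" and a: "a \<in> Aset a1" and b: "b \<in> Bset b1" and w: "w \<in> W"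
    have s: "b powr (1/k) > 0" using bB[OF b] by simp
    have z: "zS t a w \<ge> 0" by (rule S_z[OF t a w])
    have e: "b powr (1/k) * zS t a w / b powr (1/k) = zS t a w" using s by simp
    show "b powr (1 / k) / (a - 1) * fRh t a w =
       PiR p k w (b powr (1 / k) * zS t a w) a b +
       Cont k (\<lambda>a b. b powr (1 / k) / (a - 1) * fR (Suc t) a) a b (b powr (1 / k) * zS t a w)"
      unfolding total_R[OF k bB[OF b] aA[OF a] mult_nonneg_nonneg[OF less_imp_le[OF s] z]] e
      using S_Req[OF t a w] by simp
  next
    fix t a b w assume t: "t \<in> {1..T}" and a: "a \<in> Aset a1" and b: "b \<in> Bset b1" and w: "w \<in> W"
    have s: "b powr (1/k) > 0" using bB[OF b] by simp
    have z: "zS t a w \<ge> 0" by (rule S_z[OF t a w])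
    have e: "b powr (1/k) * zS t a w / b powr (1/k) = zS t a w" using s by simp
    have q: "b powr (1/k) * zS t a w \<ge> 0" using s z by simp
    show "ContInt k (\<lambda>a b. b powr (1 / k) / (a - 1) * fM (Suc t) a) a b (b powr (1 / k) * zS t a w)"
      by (rule Cont_eq(1)[OF k bB[OF b] aA[OF a] q])
    have "PiM_std c w (zS t a w) a + Eop k (fM (Suc t)) (zS t a w) a \<le> fM t a"
      by (rule S_M[OF t a w])
    then show "PiM c w (b powr (1 / k) * zS t a w) +
       Cont k (\<lambda>a b. b powr (1 / k) / (a - 1) * fM (Suc t) a) a b (b powr (1 / k) * zS t a w)
       \<le> b powr (1 / k) / (a - 1) * fM t a"
      unfolding total_M[OF k bB[OF b] aA[OF a] q] e using s aA[OF a]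
      by (intro mult_left_mono) auto
  next
    fix t a b assume t: "t \<in> {1..T}" and a: "a \<in> Aset a1" and b: "b \<in> Bset b1"
    have s: "b powr (1/k) > 0" using bB[OF b] by simp
    have w: "wS t a \<in> W" by (rule S_w[OF t a])
    have z: "zS t a (wS t a) \<ge> 0" by (rule S_z[OF t a w])
    have e: "b powr (1/k) * zS t a (wS t a) / b powr (1/k) = zS t a (wS t a)" using s by simp
    have q: "b powr (1/k) * zS t a (wS t a) \<ge> 0" using s z by simp
    show "b powr (1 / k) / (a - 1) * fM t a =
       PiM c (wS t a) (b powr (1 / k) * zS t a (wS t a)) +
       Cont k (\<lambda>a b. b powr (1 / k) / (a - 1) * fM (Suc t) a) a b (b powr (1 / k) * zS t a (wS t a))"
      unfolding total_M[OF k bB[OF b] aA[OF a] q] e using S_Meq[OF t a] by simp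
    show "b powr (1 / k) / (a - 1) * fR t a = b powr (1 / k) / (a - 1) * fRh t a (wS t a)"
      using S_V[OF t a] by simp
  qed
qed



lemma predG_01:
  assumes "k > 0" "b > 0" "a \<ge> 0"
  shows "0 \<le> predG k a b y" "predG k a b y \<le> 1"
proof -
  have B: "b + (max y 0) powr k > 0" using assms by (simp add: add_pos_nonneg)
  have x0: "b / (b + (max y 0) powr k) \<ge> 0" using B assms by simp
  have x1: "b / (b + (max y 0) powr k) \<le> 1" using B assms by simp
  have "(b / (b + (max y 0) powr k)) powr a \<le> 1" using x0 x1 assms by (intro powr_le1) auto
  then show "0 \<le> predG k a b y" using predG_alt[OF assms(1,2)] by simp
  show "predG k a b y \<le> 1" using predG_alt[OF assms(1,2)] by simp
qed

lemma Emin_cont: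
  assumes "k > 0" "a > 0"
  shows "continuous_on UNIV (\<lambda>z. Ex k a 1 (\<lambda>d. min d z))"
proof (rule lipschitz_on_continuous_on)
  show "1-lipschitz_on UNIV (\<lambda>z. Ex k a 1 (\<lambda>d. min d z))"
    by (rule lipschitz_onI) (use Ex_min_lip[OF assms(1) _ assms(2)] in \<open>auto simp: dist_real_def\<close>)
qed

lemma Eop_bound:
  assumes "k > 0" "a > 1" "a - 1/k > 0"
  shows "\<bar>Eop k f z a\<bar> \<le> (a - 1) / (a - 1/k) * \<bar>f (a + 1)\<bar> + \<bar>f a\<bar>"
proof -
  define G where "G = predG k (a - 1/k) 1 z"
  have G: "0 \<le> G" "G \<le> 1" using predG_01[of k 1 "a - 1/k" z] assms by (auto simp: G_def)
  define C where "C = (a - 1) / (a - 1/k)"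
  have c: "C \<ge> 0" using assms by (simp add: C_def)
  have "\<bar>C * G * f (a + 1)\<bar> = C * (G * \<bar>f (a + 1)\<bar>)" using G c by (simp add: abs_mult)
  also have "\<dots> \<le> C * \<bar>f (a + 1)\<bar>" using G c by (intro mult_left_mono mult_left_le_one_le) auto
  finally have "\<bar>(a - 1) / (a - 1/k) * G * f (a + 1)\<bar> \<le> (a - 1) / (a - 1/k) * \<bar>f (a + 1)\<bar>"
    by (simp add: C_def)
  moreover have "\<bar>(1 - G) * f a\<bar> \<le> \<bar>f a\<bar>" using G by (simp add: abs_mult mult_left_le_one_le)
  ultimately show ?thesis unfolding Eop_def G_def[symmetric] by linarith
qed


lemma coercive:
  assumes k: "k > 0" and a1: "a > 1" and ak: "a - 1/k > 0" and p: "p > 0" and wlo: "wlo > 0"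
  shows "\<exists>Zm \<ge> 0. \<forall>w z. w \<ge> wlo \<longrightarrow> z \<ge> Zm \<longrightarrow>
           PiR_std p k w z a + Eop k fr z a \<le> PiR_std p k w 0 a + Eop k fr 0 a"
proof -
  have a0: "a > 0" using a1 by simp
  define eps where "eps = wlo / (2 * p)"
  have eps: "eps > 0" using wlo p by (simp add: eps_def)
  from predG_top[OF k zero_less_one a0] eps
  have "eventually (\<lambda>x. dist (predG k a 1 x) 1 < eps) at_top" by (simp add: tendsto_iff)
  then obtain N where N: "\<And>x. x \<ge> N \<Longrightarrow> dist (predG k a 1 x) 1 < eps"
    by (auto simp: eventually_at_top_linorder)
  define z0 where "z0 = max N 0"
  have z0: "z0 \<ge> 0" by (simp add: z0_def)
  have e0: "1 - predG k a 1 z0 \<le> eps" using N[of z0] by (simp add: z0_def dist_real_def)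
  define Bd where "Bd = (a - 1) / (a - 1/k) * \<bar>fr (a + 1)\<bar> + \<bar>fr a\<bar>"
  have Bd0: "\<bar>fr a\<bar> \<le> Bd" using a1 ak by (simp add: Bd_def)
  define Zm where "Zm = 2 * (p * z0 + 2 * Bd / (a - 1)) / wlo"
  have Zm0: "Zm \<ge> 0" using Bd0 a1 z0 p wlo by (simp add: Zm_def)
  show ?thesis
  proof (intro exI[of _ Zm] conjI allI impI Zm0)
    fix w z assume w: "w \<ge> wlo" and z: "z \<ge> Zm"
    have z0': "z \<ge> 0" using z Zm0 by simp
    define E where "E = Ex k a 1 (\<lambda>d. min d z)"
    have E: "E \<le> z0 + z * (1 - predG k a 1 z0)"
      unfolding E_def by (rule Ex_min_bound[OF k zero_less_one a0 z0' z0])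
    have pe: "p * (z * (1 - predG k a 1 z0)) \<le> z * wlo / 2"
    proof -
      have "p * (1 - predG k a 1 z0) \<le> p * eps" using e0 p by simp
      also have "\<dots> = wlo / 2" using p by (simp add: eps_def)
      finally have "p * (1 - predG k a 1 z0) \<le> wlo / 2" .
      then have "z * (p * (1 - predG k a 1 z0)) \<le> z * (wlo / 2)" using z0' by (rule mult_left_mono)
      then show ?thesis by (simp add: algebra_simps)
    qed
    have "p * E \<le> p * (z0 + z * (1 - predG k a 1 z0))" using E p by simp
    moreover have "w * z \<ge> wlo * z" using w z0' by (simp add: mult_right_mono)
    ultimately have pe2: "p * E - w * z \<le> p * z0 - wlo * z / 2" using pe by (simp add: algebra_simps)
    have "wlo * z \<ge> wlo * Zm" using z wlo by simp
    also have "wlo * Zm = 2 * (p * z0 + 2 * Bd / (a - 1))" using wlo by (simp add: Zm_def)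
    finally have "p * z0 - wlo * z / 2 \<le> - (2 * Bd / (a - 1))" by simp
    then have "(a - 1) * (p * z0 - wlo * z / 2) \<le> (a - 1) * (- (2 * Bd / (a - 1)))"
      using a1 by (intro mult_left_mono) auto
    also have "\<dots> = - 2 * Bd" using a1 by simp
    finally have t1: "(a - 1) * (p * E - w * z) \<le> - 2 * Bd"
      using pe2 a1 by (smt (verit) mult_left_mono)
    have t2: "Eop k fr z a \<le> Bd" using Eop_bound[OF k a1 ak, of fr z] by (simp add: Bd_def)
    have t3: "PiR_std p k w 0 a + Eop k fr 0 a = fr a"
      using Ex_min_0[OF k zero_less_one a0] by (simp add: PiR_std_def Eop_def predG_zero)
    show "PiR_std p k w z a + Eop k fr z a \<le> PiR_std p k w 0 a + Eop k fr 0 a"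
      unfolding t3 using t1 t2 Bd0 by (simp add: PiR_std_def E_def)
  qed
qed


lemma hR_cont:
  assumes k: "k > 0" and a1: "a > 1" and ak: "a - 1/k > 0"
  shows "continuous_on UNIV (\<lambda>x::real\<times>real. PiR_std p k (fst x) (snd x) a + Eop k fr (snd x) a)"
proof -
  have a0: "a > 0" using a1 by simp
  have cE: "continuous_on UNIV (\<lambda>x::real\<times>real. Ex k a 1 (\<lambda>d. min d (snd x)))"
    by (rule continuous_on_compose2[OF Emin_cont[OF k a0] continuous_on_snd]) auto
  have cG: "continuous_on UNIV (\<lambda>x::real\<times>real. predG k (a - 1/k) 1 (snd x))"
    by (rule continuous_on_compose2[OF predG_cont[OF k zero_less_one] continuous_on_snd]) auto
  show ?thesis unfolding PiR_std_def Eop_def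
    by (intro continuous_intros cE cG)
qed

lemma phi_cont:
  assumes k: "k > 0"
  shows "continuous_on UNIV (\<lambda>x::real\<times>real. PiM_std c (fst x) (snd x) a + Eop k fm (snd x) a)"
proof -
  have cG: "continuous_on UNIV (\<lambda>x::real\<times>real. predG k (a - 1/k) 1 (snd x))"
    by (rule continuous_on_compose2[OF predG_cont[OF k zero_less_one] continuous_on_snd]) auto
  show ?thesis unfolding PiM_std_def Eop_def
    by (intro continuous_intros cG)
qed

lemma one_step:
  fixes fr fm :: "real \<Rightarrow> real"
  assumes k: "k > 0" and a1: "a > 1" and ak: "a - 1/k > 0" and p: "p > 0"
    and wlo: "wlo > 0" and ww: "wlo \<le> whi"
  shows "\<exists>w0 zsel. w0 \<in> {wlo..whi} \<and>
     (\<forall>w\<in>{wlo..whi}. zsel w \<ge> 0 \<and>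
        (\<forall>z\<ge>0. PiR_std p k w z a + Eop k fr z a \<le> PiR_std p k w (zsel w) a + Eop k fr (zsel w) a)) \<and>
     (\<forall>w\<in>{wlo..whi}. PiM_std c w (zsel w) a + Eop k fm (zsel w) a
                        \<le> PiM_std c w0 (zsel w0) a + Eop k fm (zsel w0) a) \<and>
     zsel \<in> borel_measurable (restrict_space borel {wlo..whi})"
proof -
  define W where "W = {wlo..whi}"
  define hR where "hR w z = PiR_std p k w z a + Eop k fr z a" for w z
  define ph where "ph w z = PiM_std c w z a + Eop k fm z a" for w z
  obtain Zm where Zm0: "Zm \<ge> 0" and Zm: "\<And>w z. w \<ge> wlo \<Longrightarrow> z \<ge> Zm \<Longrightarrow> hR w z \<le> hR w 0"
    using coercive[OF k a1 ak p wlo, of fr] unfolding hR_def by blast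
  define Z where "Z = {0..Zm}"
  have cR: "continuous_on UNIV (\<lambda>x. hR (fst x) (snd x))"
    using hR_cont[OF k a1 ak] unfolding hR_def .
  have cR1: "continuous_on UNIV (hR w)" for w
  proof -
    have "continuous_on UNIV (\<lambda>z. (\<lambda>x. hR (fst x) (snd x)) (w, z))"
      by (rule continuous_on_compose2[OF cR]) (auto intro!: continuous_intros)
    then show ?thesis by simp
  qed
  have cP: "continuous_on UNIV (\<lambda>x. ph (fst x) (snd x))"
    using phi_cont[OF k] unfolding ph_def .
  define K where "K = (W \<times> Z) \<inter> (\<Inter>z'\<in>Z. {x. hR (fst x) z' \<le> hR (fst x) (snd x)})"
  have cK: "compact K"
  proof -
    have "closed (\<Inter>z'\<in>Z. {x. hR (fst x) z' \<le> hR (fst x) (snd x)})"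
    proof (intro closed_INT ballI closed_Collect_le cR)
      fix z'
      have "continuous_on UNIV (\<lambda>x. (\<lambda>y. hR (fst y) (snd y)) (fst x, z'))"
        by (rule continuous_on_compose2[OF cR]) (auto intro!: continuous_intros)
      then show "continuous_on UNIV (\<lambda>x. hR (fst x) z')" by simp
    qed
    then show ?thesis unfolding K_def W_def Z_def by (intro compact_Int_closed compact_Times compact_Icc)
  qed
  have exmax: "\<exists>z\<in>Z. \<forall>z'\<in>Z. hR w z' \<le> hR w z" for w
    by (rule continuous_attains_sup) (use Zm0 continuous_on_subset[OF cR1[of w]] in \<open>auto simp: Z_def\<close>)
  have inK: "(w, z) \<in> K" if "w \<in> W" "z \<in> Z" "\<forall>z'\<in>Z. hR w z' \<le> hR w z" for w z
    using that by (auto simp: K_def)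
  have Kne: "K \<noteq> {}" using exmax[of wlo] inK[of wlo] ww by (auto simp: W_def)
  obtain x0 where x0: "x0 \<in> K" and x0max: "\<And>y. y \<in> K \<Longrightarrow> ph (fst y) (snd y) \<le> ph (fst x0) (snd x0)"
    using continuous_attains_sup[OF cK Kne continuous_on_subset[OF cP]] by blast
  define w0 where "w0 = fst x0"
  define z0 where "z0 = snd x0"
  define zsel where "zsel w = (if w = w0 then z0 else (SOME z. z \<in> Z \<and> (\<forall>z'\<in>Z. hR w z' \<le> hR w z)))" for w
  have zselK: "(w, zsel w) \<in> K" if "w \<in> W" for w
  proof (cases "w = w0")
    case True then show ?thesis using x0 by (simp add: zsel_def w0_def z0_def)
  next
    case False
    have "zsel w \<in> Z \<and> (\<forall>z'\<in>Z. hR w z' \<le> hR w (zsel w))"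
      unfolding zsel_def using False by simp (rule someI_ex, use exmax[of w] in blast)
    then show ?thesis using inK that by blast
  qed
  have w0W: "w0 \<in> W" using x0 by (auto simp: K_def w0_def)
  have zselZ: "zsel w \<in> Z" and zselloc: "\<forall>z'\<in>Z. hR w z' \<le> hR w (zsel w)" if "w \<in> W" for w
    using zselK[OF that] by (auto simp: K_def)
  have zselopt: "hR w z \<le> hR w (zsel w)" if "w \<in> W" "z \<ge> 0" for w z
  proof (cases "z \<le> Zm")
    case True then show ?thesis using zselloc[OF that(1)] that(2) by (auto simp: Z_def)
  next
    case False
    then have "hR w z \<le> hR w 0" using Zm[of w z] that by (auto simp: W_def)
    also have "\<dots> \<le> hR w (zsel w)" using zselloc[OF that(1)] Zm0 by (auto simp: Z_def)
    finally show ?thesis .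
  qed
  have zsel_mono: "zsel w2 \<le> zsel w1" if "w1 \<in> W" "w2 \<in> W" "w1 < w2" for w1 w2
  proof (rule ccontr)
    assume "\<not> zsel w2 \<le> zsel w1"
    then have lt: "zsel w1 < zsel w2" by simp
    have z1: "zsel w1 \<ge> 0" "zsel w2 \<ge> 0" using zselZ that by (auto simp: Z_def)
    have i1: "hR w1 (zsel w2) \<le> hR w1 (zsel w1)" using zselopt[OF that(1) z1(2)] .
    have i2: "hR w2 (zsel w1) \<le> hR w2 (zsel w2)" using zselopt[OF that(2) z1(1)] .
    have "hR w1 (zsel w2) - hR w1 (zsel w1) + (hR w2 (zsel w1) - hR w2 (zsel w2))
        = (a - 1) * ((w2 - w1) * (zsel w2 - zsel w1))"
      by (simp add: hR_def PiR_std_def algebra_simps)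
    moreover have "(a - 1) * ((w2 - w1) * (zsel w2 - zsel w1)) > 0"
      using a1 that(3) lt by simp
    ultimately show False using i1 i2 by linarith
  qed
  have meas: "zsel \<in> borel_measurable (restrict_space borel W)"
  proof -
    have "mono_on W (\<lambda>w. - zsel w)"
      by (rule mono_onI) (use zsel_mono in \<open>force simp: le_less\<close>)
    then have "(\<lambda>w. - zsel w) \<in> borel_measurable (restrict_space borel W)"
      by (rule borel_measurable_mono_on_fnc)
    then have "(\<lambda>w. - (- zsel w)) \<in> borel_measurable (restrict_space borel W)"
      by (rule borel_measurable_uminus)
    then show ?thesis by simp
  qed
  show ?thesis
  proof (intro exI[of _ w0] exI[of _ zsel] conjI ballI allI impI)
    show "w0 \<in> {wlo..whi}" using w0W by (simp add: W_def)
    show "zsel \<in> borel_measurable (restrict_space borel {wlo..whi})" using meas by (simp add: W_def)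
    fix w assume w: "w \<in> {wlo..whi}"
    then have wW: "w \<in> W" by (simp add: W_def)
    show "zsel w \<ge> 0" using zselZ[OF wW] by (simp add: Z_def)
    show "PiM_std c w (zsel w) a + Eop k fm (zsel w) a \<le> PiM_std c w0 (zsel w0) a + Eop k fm (zsel w0) a"
      using x0max[OF zselK[OF wW]] by (simp add: ph_def zsel_def w0_def z0_def)
    fix z :: real assume "z \<ge> 0"
    then show "PiR_std p k w z a + Eop k fr z a \<le> PiR_std p k w (zsel w) a + Eop k fr (zsel w) a"
      using zselopt[OF wW] by (simp add: hR_def)
  qed
qed


definition OS :: "real \<Rightarrow> real \<Rightarrow> real \<Rightarrow> real \<Rightarrow> real \<Rightarrow> (real \<Rightarrow> real) \<Rightarrow> (real \<Rightarrow> real) \<Rightarrow> real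
   \<Rightarrow> real \<Rightarrow> (real \<Rightarrow> real) \<Rightarrow> bool" where
  "OS p c k wlo whi fr fm a w0 zsel \<longleftrightarrow> w0 \<in> {wlo..whi} \<and>
     (\<forall>w\<in>{wlo..whi}. zsel w \<ge> 0 \<and>
        (\<forall>z\<ge>0. PiR_std p k w z a + Eop k fr z a \<le> PiR_std p k w (zsel w) a + Eop k fr (zsel w) a)) \<and>
     (\<forall>w\<in>{wlo..whi}. PiM_std c w (zsel w) a + Eop k fm (zsel w) a
                        \<le> PiM_std c w0 (zsel w0) a + Eop k fm (zsel w0) a) \<and>
     zsel \<in> borel_measurable (restrict_space borel {wlo..whi})"

lemma Aset_ge': "a \<in> Aset a1 \<Longrightarrow> a \<ge> a1"
  by (auto simp: Aset_def)

lemma part_a: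
  fixes k p c a1 wlo whi :: real and T :: nat
  assumes k: "k > 0" and c: "0 < c" and cp: "c < p"
    and a1: "a1 > max 1 (1 / k)" and wlo: "0 < wlo" and wc: "wlo \<le> c" and pw: "p \<le> whi"
  shows "\<exists>wS zS. is_SMPS p c k a1 {wlo..whi} T wS zS"
proof -
  have p: "p > 0" using c cp by simp
  have ww: "wlo \<le> whi" using wc cp pw by simp
  have ex: "\<exists>w0 zsel. OS p c k wlo whi fr fm a w0 zsel" if "a > 1" "a - 1/k > 0" for fr fm a
    unfolding OS_def using one_step[OF k that p wlo ww] by blast
  define WS where "WS fr fm a = (SOME w0. \<exists>zsel. OS p c k wlo whi fr fm a w0 zsel)" for fr fm a
  define ZS where "ZS fr fm a = (SOME zsel. OS p c k wlo whi fr fm a (WS fr fm a) zsel)" for fr fm a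
  have PZ: "OS p c k wlo whi fr fm a (WS fr fm a) (ZS fr fm a)" if "a > 1" "a - 1/k > 0" for fr fm a
  proof -
    have "\<exists>zsel. OS p c k wlo whi fr fm a (WS fr fm a) zsel"
      unfolding WS_def by (rule someI_ex) (rule ex[OF that])
    then show ?thesis unfolding ZS_def by (rule someI_ex)
  qed
  define hR where "hR fr a w z = PiR_std p k w z a + Eop k fr z a" for fr :: "real \<Rightarrow> real" and a w z
  define ph where "ph fm a w z = PiM_std c w z a + Eop k fm z a" for fm :: "real \<Rightarrow> real" and a w z
  define step :: "(real \<Rightarrow> real) \<times> (real \<Rightarrow> real) \<Rightarrow> (real \<Rightarrow> real) \<times> (real \<Rightarrow> real)" where
    "step v = ((\<lambda>a. hR (fst v) a (WS (fst v) (snd v) a) (ZS (fst v) (snd v) a (WS (fst v) (snd v) a))),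
               (\<lambda>a. ph (snd v) a (WS (fst v) (snd v) a) (ZS (fst v) (snd v) a (WS (fst v) (snd v) a))))" for v
  define V where "V t = (step ^^ (T + 1 - t)) ((\<lambda>_. 0), (\<lambda>_. 0))" for t
  define fR where "fR t = fst (V t)" for t
  define fM where "fM t = snd (V t)" for t
  define wS where "wS t a = WS (fR (Suc t)) (fM (Suc t)) a" for t a
  define zS where "zS t a w = ZS (fR (Suc t)) (fM (Suc t)) a w" for t a w
  define fRh where "fRh t a w = (if t \<le> T then hR (fR (Suc t)) a w (zS t a w) else 0)" for t a w
  have Vstep: "V t = step (V (Suc t))" if "t \<le> T" for t
  proof -
    have "T + 1 - t = Suc (T + 1 - Suc t)" using that by simp
    then show ?thesis unfolding V_def by simp
  qed
  have fRt: "fR t a = hR (fR (Suc t)) a (wS t a) (zS t a (wS t a))" if "t \<le> T" for t a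
    using Vstep[OF that] by (simp add: fR_def fM_def wS_def zS_def step_def)
  have fMt: "fM t a = ph (fM (Suc t)) a (wS t a) (zS t a (wS t a))" if "t \<le> T" for t a
    using Vstep[OF that] by (simp add: fR_def fM_def wS_def zS_def step_def)
  have fT: "fR (T + 1) a = 0" "fM (T + 1) a = 0" for a
    by (simp_all add: fR_def fM_def V_def)
  have aA: "a > 1" "a - 1/k > 0" if "a \<in> Aset a1" for a
    using Aset_ge'[OF that] a1 by auto
  have OSt: "OS p c k wlo whi (fR (Suc t)) (fM (Suc t)) a (wS t a) (zS t a)" if "a \<in> Aset a1" for t a
  proof -
    have e: "zS t a = ZS (fR (Suc t)) (fM (Suc t)) a" by (rule ext) (simp add: zS_def)
    show ?thesis unfolding e wS_def using PZ[OF aA[OF that]] by blast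
  qed
  show ?thesis
    unfolding is_SMPS_def
  proof (rule exI[of _ wS], rule exI[of _ zS], rule exI[of _ fR], rule exI[of _ fRh], rule exI[of _ fM])
    show "SMPS_with p c k a1 {wlo..whi} T wS zS fR fRh fM"
      unfolding SMPS_with_def std_strategies_def
    proof (intro conjI ballI allI impI)
      fix t a assume t: "t \<in> {1..T}" and a: "a \<in> Aset a1"
      note O = OSt[OF a, of t, unfolded OS_def]
      show "wS t a \<in> {wlo..whi}" using O by blast
      show "zS t a \<in> borel_measurable (restrict_space borel {wlo..whi})" using O by blast
      show "fR t a = fRh t a (wS t a)" using fRt[of t a] t by (simp add: fRh_def)
      show "fM t a = PiM_std c (wS t a) (zS t a (wS t a)) a + Eop k (fM (Suc t)) (zS t a (wS t a)) a"
        using fMt[of t a] t by (simp add: ph_def)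
      fix w assume w: "w \<in> {wlo..whi}"
      show "0 \<le> zS t a w" using O w by blast
      show "fRh t a w = PiR_std p k w (zS t a w) a + Eop k (fR (Suc t)) (zS t a w) a"
        using t by (simp add: fRh_def hR_def)
      show "PiM_std c w (zS t a w) a + Eop k (fM (Suc t)) (zS t a w) a \<le> fM t a"
        using O w fMt[of t a] t by (simp add: ph_def)
      fix z :: real assume z: "0 \<le> z"
      show "PiR_std p k w z a + Eop k (fR (Suc t)) z a \<le> fRh t a w"
        using O w z t by (simp add: fRh_def hR_def)
    next
      fix a assume a: "a \<in> Aset a1"
      show "fR (T + 1) a = 0" "fM (T + 1) a = 0" by (rule fT)+
      fix w show "fRh (T + 1) a w = 0" by (simp add: fRh_def)
    qed
  qed
qed


theorem theorem1:
  fixes k p c b1 a1 wlo whi :: real and T :: nat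
  assumes "k > 0" and "0 < c" and "c < p" and "T \<ge> 1" and "b1 > 0"
    and "a1 > max 1 (1 / k)"
    and "0 < wlo" and "wlo \<le> c" and "p \<le> whi"
  shows "(\<exists>wS zS. is_SMPS p c k a1 {wlo..whi} T wS zS)
       \<and> (\<exists>wS qS. is_MPE p c k a1 b1 {wlo..whi} T wS qS)
       \<and> (\<forall>wS zS fR fRh fM. SMPS_with p c k a1 {wlo..whi} T wS zS fR fRh fM \<longrightarrow>
            MPE_with p c k a1 b1 {wlo..whi} T
              (\<lambda>t a b. wS t a)
              (\<lambda>t a b w. b powr (1 / k) * zS t a w)
              (\<lambda>t a b. b powr (1 / k) / (a - 1) * fR t a)
              (\<lambda>t a b w. b powr (1 / k) / (a - 1) * fRh t a w)
              (\<lambda>t a b. b powr (1 / k) / (a - 1) * fM t a))"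
proof -
  have A: "\<exists>wS zS. is_SMPS p c k a1 {wlo..whi} T wS zS"
    by (rule part_a) (use assms in auto)
  have C: "\<forall>wS zS fR fRh fM. SMPS_with p c k a1 {wlo..whi} T wS zS fR fRh fM \<longrightarrow>
            MPE_with p c k a1 b1 {wlo..whi} T
              (\<lambda>t a b. wS t a)
              (\<lambda>t a b w. b powr (1 / k) * zS t a w)
              (\<lambda>t a b. b powr (1 / k) / (a - 1) * fR t a)
              (\<lambda>t a b w. b powr (1 / k) / (a - 1) * fRh t a w)
              (\<lambda>t a b. b powr (1 / k) / (a - 1) * fM t a)"
    using part_c[OF assms(1) assms(5) assms(6)] by blast
  have B: "\<exists>wS qS. is_MPE p c k a1 b1 {wlo..whi} T wS qS"
  proof -
    from A obtain wS zS fR fRh fM where S: "SMPS_with p c k a1 {wlo..whi} T wS zS fR fRh fM"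
      unfolding is_SMPS_def by blast
    from C S show ?thesis unfolding is_MPE_def by blast
  qed
  show ?thesis using A B C by blast
qed

end
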